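(* The relation $\le$ on isomorphism classes of codes, defined by $[\mathcal{D}]\le[\mathcal{C}]$ if and only if some finite (possibly empty) sequence of operations takes $\mathcal{C}$ to a code isomorphic to $\mathcal{D}$, is a well-defined partial order on the set of isomorphism classes of codes.
   Context: A code is a subset $\mathcal{C}\subseteq 2^{[n]}$. For $\sigma\subseteq[n]$, $\mathrm{Tk}_{\mathcal{C}}(\sigma)=\{c\in\mathcal{C}\mid\sigma\subseteq c\}$; a trunk in $\mathcal{C}$ is a subset that is empty or of this form (a trunk is itself regarded as a code in $2^{[n]}$). A function $f:\mathcal{C}\to\mathcal{D}$ between codes is a morphism if preimages of trunks in $\mathcal{D}$ are trunks in $\mathcal{C}$; an isomorphism is a morphism with an inverse function that is also a morphism. An operation on a code $\mathcal{C}$ is either replacing $\mathcal{C}$ by its image $f(\mathcal{C})$ under some morphism $f$ with domain $\mathcal{C}$, or replacing $\mathcal{C}$ by one of its trunks. *)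

theory Defs
  imports Main
begin

definition is_code :: "nat set set \<Rightarrow> bool" where
  "is_code C \<longleftrightarrow> (\<exists>n::nat. \<forall>c\<in>C. c \<subseteq> {1..n})"

definition codes :: "nat set set set" where
  "codes = {C. is_code C}"

definition Tk :: "nat set set \<Rightarrow> nat set \<Rightarrow> nat set set" where
  "Tk C \<sigma> = {c \<in> C. \<sigma> \<subseteq> c}"

definition is_trunk :: "nat set set \<Rightarrow> nat set set \<Rightarrow> bool" where
  "is_trunk C T \<longleftrightarrow> T = {} \<or> (\<exists>\<sigma>. T = Tk C \<sigma>)"

definition is_morphism :: "nat set set \<Rightarrow> nat set set \<Rightarrow> (nat set \<Rightarrow> nat set) \<Rightarrow> bool" where
  "is_morphism C D f \<longleftrightarrow>
     (\<forall>c\<in>C. f c \<in> D) \<and> (\<forall>T. is_trunk D T \<longrightarrow> is_trunk C {c \<in> C. f c \<in> T})"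

definition code_iso :: "nat set set \<Rightarrow> nat set set \<Rightarrow> bool" where
  "code_iso C D \<longleftrightarrow> (\<exists>f g. is_morphism C D f \<and> is_morphism D C g \<and>
       (\<forall>c\<in>C. g (f c) = c) \<and> (\<forall>d\<in>D. f (g d) = d))"

definition op_step :: "nat set set \<Rightarrow> nat set set \<Rightarrow> bool" where
  "op_step C C' \<longleftrightarrow> (\<exists>D f. is_code D \<and> is_morphism C D f \<and> C' = f ` C) \<or> is_trunk C C'"

definition code_le :: "nat set set \<Rightarrow> nat set set \<Rightarrow> bool" where
  "code_le D C \<longleftrightarrow> (\<exists>C'. op_step\<^sup>*\<^sup>* C C' \<and> code_iso C' D)"

definition iso_rel :: "(nat set set \<times> nat set set) set" where
  "iso_rel = {(C, D). is_code C \<and> is_code D \<and> code_iso C D}"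

definition class_le :: "(nat set set set \<times> nat set set set) set" where
  "class_le = {(X, Y). X \<in> codes // iso_rel \<and> Y \<in> codes // iso_rel \<and>
                        (\<exists>D\<in>X. \<exists>C\<in>Y. code_le D C)}"

end

theory Submission
  imports Defs
begin

lemma morph_into: "is_morphism C D f \<Longrightarrow> c \<in> C \<Longrightarrow> f c \<in> D"
  unfolding is_morphism_def by blast
lemma morph_pre: "is_morphism C D f \<Longrightarrow> is_trunk D T \<Longrightarrow> is_trunk C {c\<in>C. f c \<in> T}"
  unfolding is_morphism_def by blast
lemma morphI: "(\<And>c. c \<in> C \<Longrightarrow> f c \<in> D) \<Longrightarrow> (\<And>T. is_trunk D T \<Longrightarrow> is_trunk C {c\<in>C. f c \<in> T})
  \<Longrightarrow> is_morphism C D f"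
  unfolding is_morphism_def by blast
lemma code_isoI: "is_morphism C D f \<Longrightarrow> is_morphism D C g \<Longrightarrow> (\<And>c. c\<in>C \<Longrightarrow> g (f c) = c)
  \<Longrightarrow> (\<And>d. d\<in>D \<Longrightarrow> f (g d) = d) \<Longrightarrow> code_iso C D"
  unfolding code_iso_def by (rule exI[of _ f], rule exI[of _ g]) blast
lemma code_isoE: assumes "code_iso C D"
  obtains f g where "is_morphism C D f" "is_morphism D C g" "\<forall>c\<in>C. g (f c) = c"
    "\<forall>d\<in>D. f (g d) = d"
proof -
  from assms obtain f g where fg: "is_morphism C D f \<and> is_morphism D C g \<and>
       (\<forall>c\<in>C. g (f c) = c) \<and> (\<forall>d\<in>D. f (g d) = d)" unfolding code_iso_def by blast
  show thesis by (rule that[of f g]) (simp_all add: fg)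
qed

lemma Tk_sub: "Tk C s \<subseteq> C" by (auto simp: Tk_def)

lemma trunk_sub: "is_trunk C T \<Longrightarrow> T \<subseteq> C"
  by (auto simp: is_trunk_def Tk_def)

lemma trunk_restrict:
  assumes "is_trunk A S" "S \<subseteq> Y" "Y \<subseteq> A" shows "is_trunk Y S"
proof -
  { fix r assume S: "S = Tk A r"
    have "Tk Y r = S" using S assms(2,3) by (auto simp: Tk_def)
    hence ?thesis by (auto simp: is_trunk_def) }
  thus ?thesis using assms(1) by (auto simp: is_trunk_def)
qed

lemma trunk_trans:
  assumes "is_trunk A X" "is_trunk X T" shows "is_trunk A T"
proof (cases "T = {}")
  case True thus ?thesis by (simp add: is_trunk_def)
next
  case False
  then obtain t where T: "T = Tk X t" using assms(2) by (auto simp: is_trunk_def)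
  show ?thesis
  proof (cases "X = {}")
    case True thus ?thesis using T by (simp add: is_trunk_def Tk_def)
  next
    case False
    then obtain s where X: "X = Tk A s" using assms(1) by (auto simp: is_trunk_def)
    have "T = Tk A (s \<union> t)" using T X by (auto simp: Tk_def)
    thus ?thesis by (auto simp: is_trunk_def)
  qed
qed

lemma morph_id: "is_morphism C C id"
proof (rule morphI)
  fix T assume "is_trunk C T"
  hence "{c\<in>C. id c \<in> T} = T" using trunk_sub by auto
  thus "is_trunk C {c\<in>C. id c \<in> T}" using \<open>is_trunk C T\<close> by simp
qed simp

lemma morph_comp:
  assumes "is_morphism A B g" "is_morphism B D f" shows "is_morphism A D (f \<circ> g)"
proof (rule morphI)
  fix c assume "c \<in> A" thus "(f \<circ> g) c \<in> D" using assms morph_into by simp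
next
  fix T assume "is_trunk D T"
  hence "is_trunk B {b\<in>B. f b \<in> T}" using assms(2) morph_pre by blast
  hence "is_trunk A {a\<in>A. g a \<in> {b\<in>B. f b \<in> T}}" using assms(1) morph_pre by blast
  moreover have "{a\<in>A. g a \<in> {b\<in>B. f b \<in> T}} = {a\<in>A. (f \<circ> g) a \<in> T}"
    using assms(1) morph_into by fastforce
  ultimately show "is_trunk A {a\<in>A. (f \<circ> g) a \<in> T}" by simp
qed

lemma iso_refl: "code_iso C C"
  by (rule code_isoI[OF morph_id morph_id]) simp_all

lemma iso_sym: assumes "code_iso C D" shows "code_iso D C"
proof -
  obtain f g where fg: "is_morphism C D f" "is_morphism D C g" "\<forall>c\<in>C. g (f c) = c" "\<forall>d\<in>D. f (g d) = d"
    using assms by (rule code_isoE)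
  show ?thesis by (rule code_isoI[OF fg(2,1)]) (simp_all add: fg)
qed

lemma iso_trans: assumes "code_iso A B" "code_iso B C" shows "code_iso A C"
proof -
  obtain f g where fg: "is_morphism A B f" "is_morphism B A g" "\<forall>c\<in>A. g (f c) = c" "\<forall>d\<in>B. f (g d) = d"
    using assms(1) by (rule code_isoE)
  obtain f2 g2 where fg2: "is_morphism B C f2" "is_morphism C B g2" "\<forall>c\<in>B. g2 (f2 c) = c" "\<forall>d\<in>C. f2 (g2 d) = d"
    using assms(2) by (rule code_isoE)
  show ?thesis
  proof (rule code_isoI[OF morph_comp[OF fg(1) fg2(1)] morph_comp[OF fg2(2) fg(2)]])
    fix c assume "c \<in> A" thus "(g \<circ> g2) ((f2 \<circ> f) c) = c" using fg fg2 morph_into by simp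
  next
    fix d assume "d \<in> C" thus "(f2 \<circ> f) ((g \<circ> g2) d) = d" using fg fg2 morph_into by simp
  qed
qed

lemma morph_into_image: assumes m: "is_morphism C D f" shows "is_morphism C (f ` C) f"
proof (rule morphI)
  fix T assume T: "is_trunk (f ` C) T"
  show "is_trunk C {c\<in>C. f c \<in> T}"
  proof (cases "T = {}")
    case True thus ?thesis by (simp add: is_trunk_def)
  next
    case False
    then obtain t where t: "T = Tk (f ` C) t" using T by (auto simp: is_trunk_def)
    have "{c\<in>C. f c \<in> T} = {c\<in>C. f c \<in> Tk D t}" using t m morph_into by (auto simp: Tk_def)
    moreover have "is_trunk D (Tk D t)" by (auto simp: is_trunk_def)
    ultimately show ?thesis using m morph_pre by metis
  qed
qed simp


lemma surj_lem:
  assumes "is_morphism A B f" "is_morphism B A h" "\<forall>d\<in>B. f (h d) = d" shows "B = f ` A"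
proof
  show "f ` A \<subseteq> B" using assms(1) morph_into by blast
  show "B \<subseteq> f ` A"
  proof
    fix d assume d: "d \<in> B"
    have "h d \<in> A" using assms(2) d morph_into by blast
    moreover have "d = f (h d)" using assms(3) d by simp
    ultimately show "d \<in> f ` A" by blast
  qed
qed

lemma sim_step:
  assumes "code_iso A B" "op_step B X" shows "\<exists>X'. op_step A X' \<and> code_iso X' X"
proof -
  obtain f h where fh: "is_morphism A B f" "is_morphism B A h" "\<forall>c\<in>A. h (f c) = c" "\<forall>d\<in>B. f (h d) = d"
    using assms(1) by (rule code_isoE)
  have AB: "B = f ` A" by (rule surj_lem[OF fh(1,2,4)])
  show ?thesis
  proof (cases "is_trunk B X")
    case False
    then obtain D g where g: "is_code D" "is_morphism B D g" "X = g ` B" using assms(2) unfolding op_step_def by blast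
    have "is_morphism A D (g \<circ> f)" using morph_comp fh(1) g(2) by blast
    moreover have "X = (g \<circ> f) ` A" using g AB by (simp add: image_comp)
    ultimately have "op_step A X" using g(1) unfolding op_step_def by blast
    thus ?thesis using iso_refl by blast
  next
    case True
    hence tX: "is_trunk B X" .
    define X' where "X' = {a\<in>A. f a \<in> X}"
    have tX': "is_trunk A X'" unfolding X'_def using morph_pre[OF fh(1) tX] .
    have XB: "X \<subseteq> B" using trunk_sub tX by blast
    have X'A: "X' \<subseteq> A" by (auto simp: X'_def)
    have m1: "is_morphism X' X f"
    proof (rule morphI)
      fix c assume "c \<in> X'" thus "f c \<in> X" by (simp add: X'_def)
    next
      fix T assume T: "is_trunk X T"
      have TB: "is_trunk B T" using trunk_trans tX T by blast
      have TX: "T \<subseteq> X" using trunk_sub T by blast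
      have eq: "{a\<in>X'. f a \<in> T} = {a\<in>A. f a \<in> T}" using TX by (auto simp: X'_def)
      have "is_trunk A {a\<in>A. f a \<in> T}" using morph_pre[OF fh(1) TB] .
      moreover have "{a\<in>A. f a \<in> T} \<subseteq> X'" using TX by (auto simp: X'_def)
      ultimately show "is_trunk X' {a\<in>X'. f a \<in> T}" unfolding eq using trunk_restrict X'A by blast
    qed
    have m2: "is_morphism X X' h"
    proof (rule morphI)
      fix b assume "b \<in> X"
      thus "h b \<in> X'" using fh(2,4) XB morph_into unfolding X'_def by fastforce
    next
      fix T assume T: "is_trunk X' T"
      have TA: "is_trunk A T" using trunk_trans tX' T by blast
      have TX: "T \<subseteq> X'" using trunk_sub T by blast
      have eq: "{b\<in>X. h b \<in> T} = {b\<in>B. h b \<in> T}" using TX XB fh(4) by (auto simp: X'_def)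
      have "is_trunk B {b\<in>B. h b \<in> T}" using morph_pre[OF fh(2) TA] .
      moreover have "{b\<in>B. h b \<in> T} \<subseteq> X" using TX fh(4) by (auto simp: X'_def)
      ultimately show "is_trunk X {b\<in>X. h b \<in> T}" unfolding eq using trunk_restrict XB by blast
    qed
    have "code_iso X' X"
      by (rule code_isoI[OF m1 m2]) (use fh(3,4) XB X'A in blast)+
    moreover have "op_step A X'" using tX' by (simp add: op_step_def)
    ultimately show ?thesis by blast
  qed
qed

lemma sim_steps:
  assumes "op_step\<^sup>*\<^sup>* B X" "code_iso A B" shows "\<exists>X'. op_step\<^sup>*\<^sup>* A X' \<and> code_iso X' X"
  using assms(1)
proof (induction rule: rtranclp_induct)
  case base thus ?case using assms(2) by blast
next
  case (step Y Z)
  then obtain Y' where Y': "op_step\<^sup>*\<^sup>* A Y'" "code_iso Y' Y" by blast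
  obtain Z' where Z': "op_step Y' Z'" "code_iso Z' Z" using sim_step[OF Y'(2) step(2)] by blast
  have "op_step\<^sup>*\<^sup>* A Z'" using Y'(1) Z'(1) by (rule rtranclp.rtrancl_into_rtrancl)
  thus ?case using Z'(2) by blast
qed

definition ct :: "nat set set \<Rightarrow> nat" where "ct C = card {T. is_trunk C T}"

lemma finite_trunks: "finite C \<Longrightarrow> finite {T. is_trunk C T}"
  by (rule finite_subset[of _ "Pow C"]) (auto dest: trunk_sub)

lemma preP_inj:
  assumes "D \<subseteq> f ` C" shows "inj_on (\<lambda>T. {c\<in>C. f c \<in> T}) {T. is_trunk D T}"
proof (rule inj_onI)
  fix S T assume S: "S \<in> {T. is_trunk D T}" and T: "T \<in> {T. is_trunk D T}"
    and eq: "{c\<in>C. f c \<in> S} = {c\<in>C. f c \<in> T}"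
  have "S \<subseteq> D" "T \<subseteq> D" using S T trunk_sub by auto
  hence "S = f ` {c\<in>C. f c \<in> S}" "T = f ` {c\<in>C. f c \<in> T}" using assms by blast+
  thus "S = T" using eq by simp
qed

lemma preP_sub:
  assumes "is_morphism C D f" shows "(\<lambda>T. {c\<in>C. f c \<in> T}) ` {T. is_trunk D T} \<subseteq> {T. is_trunk C T}"
  using morph_pre[OF assms] by blast

lemma ct_le:
  assumes "is_morphism C D f" "D \<subseteq> f ` C" "finite C" shows "ct D \<le> ct C"
  unfolding ct_def
  by (rule card_inj_on_le[OF preP_inj[OF assms(2)] preP_sub[OF assms(1)] finite_trunks[OF assms(3)]])

lemma iso_cards:
  assumes "code_iso C D" "finite C" shows "finite D \<and> card D = card C \<and> ct D = ct C"
proof -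
  obtain f h where fh: "is_morphism C D f" "is_morphism D C h" "\<forall>c\<in>C. h (f c) = c" "\<forall>d\<in>D. f (h d) = d"
    using assms(1) by (rule code_isoE)
  have D: "D = f ` C" by (rule surj_lem[OF fh(1,2,4)])
  have fD: "finite D" using D assms(2) by simp
  have C: "C = h ` D" by (rule surj_lem[OF fh(2,1,3)])
  have "inj_on f C" using fh(3) by (metis inj_onI)
  hence "card D = card C" using D card_image by blast
  moreover have "ct D \<le> ct C" using ct_le fh(1) D assms(2) by blast
  moreover have "ct C \<le> ct D" using ct_le fh(2) C fD by blast
  ultimately show ?thesis using fD by simp
qed

lemma step_meas:
  assumes "op_step C X" "finite C"
  shows "finite X \<and> card X \<le> card C \<and> ct X \<le> ct C \<and> (card X = card C \<and> ct X = ct C \<longrightarrow> code_iso C X)"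
proof (cases "is_trunk C X")
  case True
  have XC: "X \<subseteq> C" using True trunk_sub by blast
  have fX: "finite X" using XC assms(2) finite_subset by blast
  have "{T. is_trunk X T} \<subseteq> {T. is_trunk C T}" using True trunk_trans by blast
  hence "ct X \<le> ct C" unfolding ct_def by (rule card_mono[OF finite_trunks[OF assms(2)]])
  moreover have "card X = card C \<longrightarrow> X = C" using XC assms(2) card_subset_eq by blast
  moreover have "card X \<le> card C" using XC assms(2) card_mono by blast
  ultimately show ?thesis using fX iso_refl by metis
next
  case False
  then obtain D f where g: "is_morphism C D f" "X = f ` C" using assms(1) unfolding op_step_def by blast
  have m: "is_morphism C X f" using morph_into_image g by blast
  have fX: "finite X" using g assms(2) by simp
  have cX: "card X \<le> card C" using g card_image_le assms(2) by blast
  have ctX: "ct X \<le> ct C" using ct_le m g assms(2) by blast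
  have "code_iso C X" if eq: "card X = card C" "ct X = ct C"
  proof -
    have inj: "inj_on f C" using eq(1) g assms(2) eq_card_imp_inj_on by blast
    let ?P = "\<lambda>T. {c\<in>C. f c \<in> T}"
    have injP: "inj_on ?P {T. is_trunk X T}" using preP_inj g(2) by blast
    have sub: "?P ` {T. is_trunk X T} \<subseteq> {T. is_trunk C T}" by (rule preP_sub[OF m])
    have "card (?P ` {T. is_trunk X T}) = card {T. is_trunk X T}" by (rule card_image[OF injP])
    hence "card (?P ` {T. is_trunk X T}) = card {T. is_trunk C T}" using eq(2) unfolding ct_def by simp
    hence allP: "?P ` {T. is_trunk X T} = {T. is_trunk C T}"
      by (rule card_subset_eq[OF finite_trunks[OF assms(2)] sub])
    define h where "h = inv_into C f"
    have h1: "\<And>c. c\<in>C \<Longrightarrow> h (f c) = c" using inj by (simp add: h_def)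
    have h2: "\<And>d. d\<in>X \<Longrightarrow> f (h d) = d" using g(2) by (simp add: h_def f_inv_into_f)
    have "is_morphism X C h"
    proof (rule morphI)
      fix d assume "d \<in> X" thus "h d \<in> C" using g(2) by (simp add: h_def inv_into_into)
    next
      fix S assume "is_trunk C S"
      hence "S \<in> ?P ` {T. is_trunk X T}" using allP by simp
      then obtain T where T: "is_trunk X T" "S = ?P T" by blast
      have TX: "T \<subseteq> X" using T trunk_sub by blast
      have "{d\<in>X. h d \<in> S} = T"
      proof
        show "{d\<in>X. h d \<in> S} \<subseteq> T" using T(2) h2 by auto
        show "T \<subseteq> {d\<in>X. h d \<in> S}"
        proof
          fix d assume d: "d \<in> T"
          hence dX: "d \<in> X" using TX by blast
          have "h d \<in> C" using dX g(2) by (simp add: h_def inv_into_into)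
          moreover have "f (h d) \<in> T" using h2[OF dX] d by simp
          ultimately show "d \<in> {d\<in>X. h d \<in> S}" using T(2) dX by simp
        qed
      qed
      thus "is_trunk X {d\<in>X. h d \<in> S}" using T by simp
    qed
    thus ?thesis by (rule code_isoI[OF m]) (simp_all add: h1 h2)
  qed
  thus ?thesis using fX cX ctX by blast
qed

lemma steps_meas:
  assumes "op_step\<^sup>*\<^sup>* C X" "finite C"
  shows "finite X \<and> card X \<le> card C \<and> ct X \<le> ct C \<and> (card X = card C \<and> ct X = ct C \<longrightarrow> code_iso C X)"
  using assms(1)
proof (induction rule: rtranclp_induct)
  case base thus ?case using assms(2) iso_refl by blast
next
  case (step Y Z)
  have Y: "finite Y" "card Y \<le> card C" "ct Y \<le> ct C" "card Y = card C \<and> ct Y = ct C \<longrightarrow> code_iso C Y"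
    using step.IH by blast+
  have Z: "finite Z" "card Z \<le> card Y" "ct Z \<le> ct Y" "card Z = card Y \<and> ct Z = ct Y \<longrightarrow> code_iso Y Z"
    using step_meas[OF step(2) Y(1)] by blast+
  have "card Z \<le> card C" "ct Z \<le> ct C" using Y Z by linarith+
  moreover have "code_iso C Z" if "card Z = card C" "ct Z = ct C"
  proof -
    have "card Y = card C" "ct Y = ct C" "card Z = card Y" "ct Z = ct Y" using that Y Z by linarith+
    thus ?thesis using Y(4) Z(4) iso_trans by blast
  qed
  ultimately show ?case using Z(1) by blast
qed


lemma code_finite: "is_code C \<Longrightarrow> finite C"
  unfolding is_code_def by (metis Pow_iff finite_Pow_iff finite_atLeastAtMost finite_subset subsetI)

lemma equiv_iso: "equiv codes iso_rel"
proof (rule equivI)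
  show "iso_rel \<subseteq> codes \<times> codes" by (auto simp: iso_rel_def codes_def)
  show "refl_on codes iso_rel" by (auto simp: refl_on_def iso_rel_def codes_def iso_refl)
  show "sym iso_rel" by (auto simp: sym_def iso_rel_def intro: iso_sym)
  show "trans iso_rel" unfolding trans_def iso_rel_def using iso_trans by blast
qed

lemma wd:
  assumes "code_iso C C'" "code_iso D D'" "code_le D C" shows "code_le D' C'"
proof -
  obtain C1 where C1: "op_step\<^sup>*\<^sup>* C C1" "code_iso C1 D" using assms(3) unfolding code_le_def by blast
  obtain X where X: "op_step\<^sup>*\<^sup>* C' X" "code_iso X C1" using sim_steps[OF C1(1) iso_sym[OF assms(1)]] by blast
  have "code_iso X D'" using iso_trans[OF iso_trans[OF X(2) C1(2)] assms(2)] .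
  thus ?thesis unfolding code_le_def using X(1) by blast
qed

lemma le_trans_codes:
  assumes "code_le D C" "code_le C E" shows "code_le D E"
proof -
  obtain E1 where E1: "op_step\<^sup>*\<^sup>* E E1" "code_iso E1 C" using assms(2) unfolding code_le_def by blast
  obtain C1 where C1: "op_step\<^sup>*\<^sup>* C C1" "code_iso C1 D" using assms(1) unfolding code_le_def by blast
  obtain X where X: "op_step\<^sup>*\<^sup>* E1 X" "code_iso X C1" using sim_steps[OF C1(1) E1(2)] by blast
  have "op_step\<^sup>*\<^sup>* E X" using E1(1) X(1) by (rule rtranclp_trans)
  moreover have "code_iso X D" using iso_trans[OF X(2) C1(2)] .
  ultimately show ?thesis unfolding code_le_def by blast
qed

lemma le_antisym_codes:
  assumes "finite C" "finite D" "code_le D C" "code_le C D" shows "code_iso C D"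
proof -
  obtain C1 where C1: "op_step\<^sup>*\<^sup>* C C1" "code_iso C1 D" using assms(3) unfolding code_le_def by blast
  obtain D1 where D1: "op_step\<^sup>*\<^sup>* D D1" "code_iso D1 C" using assms(4) unfolding code_le_def by blast
  have a: "finite C1" "card C1 \<le> card C" "ct C1 \<le> ct C" "card C1 = card C \<and> ct C1 = ct C \<longrightarrow> code_iso C C1"
    using steps_meas[OF C1(1) assms(1)] by blast+
  have b: "finite D1" "card D1 \<le> card D" "ct D1 \<le> ct D"
    using steps_meas[OF D1(1) assms(2)] by blast+
  have c: "card D = card C1" "ct D = ct C1" using iso_cards[OF C1(2) a(1)] by simp_all
  have d: "card C = card D1" "ct C = ct D1" using iso_cards[OF D1(2) b(1)] by simp_all
  have "card C1 = card C" "ct C1 = ct C" using a b c d by linarith+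
  hence "code_iso C C1" using a(4) by blast
  thus ?thesis using iso_trans C1(2) by blast
qed

theorem proposition5p1:
  shows "equiv codes iso_rel
    \<and> (\<forall>C C' D D'. is_code C \<and> is_code C' \<and> is_code D \<and> is_code D' \<and>
          code_iso C C' \<and> code_iso D D' \<longrightarrow> (code_le D C \<longleftrightarrow> code_le D' C'))
    \<and> partial_order_on (codes // iso_rel) class_le"
proof (intro conjI allI impI)
  show E: "equiv codes iso_rel" by (rule equiv_iso)
  fix C C' D D'
  assume A: "is_code C \<and> is_code C' \<and> is_code D \<and> is_code D' \<and> code_iso C C' \<and> code_iso D D'"
  hence i1: "code_iso C C'" and i2: "code_iso D D'" by simp_all
  show "code_le D C \<longleftrightarrow> code_le D' C'"
  proof
    assume "code_le D C" thus "code_le D' C'" by (rule wd[OF i1 i2])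
  next
    assume "code_le D' C'" thus "code_le D C" by (rule wd[OF iso_sym[OF i1] iso_sym[OF i2]])
  qed
next
  have E: "equiv codes iso_rel" by (rule equiv_iso)
  have memc: "\<And>X x. X \<in> codes // iso_rel \<Longrightarrow> x \<in> X \<Longrightarrow> is_code x"
    using in_quotient_imp_subset[OF E] by (auto simp: codes_def)
  have rel: "code_iso x y" if "X \<in> codes // iso_rel" "x \<in> X" "y \<in> X" for X x y
  proof -
    have "{x, y} \<subseteq> X" using that by blast
    hence "(x, y) \<in> iso_rel" by (rule in_quotient_imp_in_rel[OF E that(1)])
    thus ?thesis by (simp add: iso_rel_def)
  qed
  show "partial_order_on (codes // iso_rel) class_le"
    unfolding partial_order_on_def preorder_on_def
  proof (intro conjI)
    show "class_le \<subseteq> codes // iso_rel \<times> codes // iso_rel" by (auto simp: class_le_def)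
    show "refl_on (codes // iso_rel) class_le"
    proof (unfold refl_on_def, intro ballI)
      fix X assume X: "X \<in> codes // iso_rel"
      then obtain x where x: "X = iso_rel `` {x}" "x \<in> codes" by (rule quotientE)
      have "x \<in> X" using equiv_class_self[OF E x(2)] x(1) by simp
      moreover have "code_le x x" unfolding code_le_def using iso_refl by blast
      ultimately show "(X, X) \<in> class_le" using X unfolding class_le_def by blast
    qed
    show "trans class_le"
    proof (rule transI)
      fix X Y Z assume XY: "(X, Y) \<in> class_le" and YZ: "(Y, Z) \<in> class_le"
      obtain D C where DC: "D \<in> X" "C \<in> Y" "code_le D C" and XYq: "X \<in> codes // iso_rel" "Y \<in> codes // iso_rel"
        using XY unfolding class_le_def by blast
      obtain C2 E' where CE: "C2 \<in> Y" "E' \<in> Z" "code_le C2 E'" and Zq: "Z \<in> codes // iso_rel"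
        using YZ unfolding class_le_def by blast
      have "code_le D C2" using wd[OF rel[OF XYq(2) DC(2) CE(1)] iso_refl DC(3)] .
      hence "code_le D E'" using le_trans_codes CE(3) by blast
      thus "(X, Z) \<in> class_le" using DC(1) CE(2) XYq Zq unfolding class_le_def by blast
    qed
    show "antisym class_le"
    proof (rule antisymI)
      fix X Y assume XY: "(X, Y) \<in> class_le" and YX: "(Y, X) \<in> class_le"
      obtain D C where DC: "D \<in> X" "C \<in> Y" "code_le D C" and XYq: "X \<in> codes // iso_rel" "Y \<in> codes // iso_rel"
        using XY unfolding class_le_def by blast
      obtain C2 D2 where CD: "C2 \<in> Y" "D2 \<in> X" "code_le C2 D2"
        using YX unfolding class_le_def by blast
      have "code_le C D" by (rule wd[OF rel[OF XYq(1) CD(2) DC(1)] rel[OF XYq(2) CD(1) DC(2)] CD(3)])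
      have fC: "finite C" by (rule code_finite[OF memc[OF XYq(2) DC(2)]])
      have fD: "finite D" by (rule code_finite[OF memc[OF XYq(1) DC(1)]])
      have "code_iso C D" by (rule le_antisym_codes[OF fC fD DC(3) \<open>code_le C D\<close>])
      hence "(D, C) \<in> iso_rel" using memc[OF XYq(1) DC(1)] memc[OF XYq(2) DC(2)] iso_sym unfolding iso_rel_def by blast
      thus "X = Y" using quotient_eqI[OF E XYq DC(1,2)] by blast
    qed
  qed
qed

end
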